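(* Let $2 \leq d \leq n$ and let $C > 0$. Suppose that for every choice of families $\mathcal{T}_1, \dots, \mathcal{T}_d$ of $1$-tubes in $\mathbb{R}^n$ and every finitely supported nonnegative function $M : \mathcal{Q} \to \mathbb{R}$ with $\sum_{Q \in \mathcal{Q}} M(Q)^n = 1$, there exist nonnegative functions $S_j : \mathcal{Q} \times \mathcal{T}_j \to \mathbb{R}$ ($1 \le j \le d$) such that (i) for all $Q \in \mathcal{Q}$ and all $T_1 \in \mathcal{T}_1, \dots, T_d \in \mathcal{T}_d$ with $T_j \cap Q \neq \emptyset$ for every $j$, $$e(T_1) \wedge \cdots \wedge e(T_d)\, M(Q)^n \leq C\, S_1(Q,T_1)\cdots S_d(Q,T_d);$$ (ii) for all $j$ and all $T_j \in \mathcal{T}_j$, $$\sum_{Q \in \mathcal{Q} :\, T_j \cap Q \neq \emptyset} S_j(Q,T_j) \leq C.$$ Then there is a constant $C_{d,n}$ (depending only on $C$, $d$, $n$) such that for all families $\mathcal{T}_1,\dots,\mathcal{T}_d$ of $1$-tubes in $\mathbb{R}^n$ and all nonnegative coefficients $a_{T_j}$, $$\int_{\mathbb{R}^n} \left(\sum_{T_1 \in \mathcal{T}_1} \cdots \sum_{T_d \in \mathcal{T}_d} a_{T_1}\chi_{T_1}(x) \cdots a_{T_d}\chi_{T_d}(x)\; e(T_1)\wedge \cdots \wedge e(T_d)\right)^{1/(d-1)} dx \leq C_{d,n}\left(\sum_{T_1 \in \mathcal{T}_1} a_{T_1} \cdots \sum_{T_d \in \mathcal{T}_d} a_{T_d}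\right)^{1/(d-1)}.$$
   Context: $\mathcal{Q}$ denotes the lattice of unit cubes $\prod_{i=1}^n [m_i, m_i+1)$, $m_i \in \mathbb{Z}$, in $\mathbb{R}^n$. A $1$-tube $T$ is the $1$-neighbourhood of a doubly-infinite line in $\mathbb{R}^n$, with direction $e(T) \in \mathbb{S}^{n-1}$ parallel to the line; $\chi_T$ is its indicator function. For $v_1,\dots,v_d \in \mathbb{R}^n$, $v_1 \wedge \cdots \wedge v_d$ is the unsigned $d$-dimensional volume of the parallelepiped they span. *)

theory Defs
  imports "HOL-Analysis.Analysis"
begin

text \<open>A 1-tube is represented by a pair (p, v): a base point p and a unit direction v.
  Its point set is the (open) 1-neighbourhood of the line p + t v; its direction is v.\<close>
type_synonym 'n tube = "(real^'n) \<times> (real^'n)"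

definition is_tube :: "('n::finite) tube \<Rightarrow> bool" where
  "is_tube T \<longleftrightarrow> norm (snd T) = 1"

definition tube_set :: "('n::finite) tube \<Rightarrow> (real^'n) set" where
  "tube_set T = {x. \<exists>t::real. dist x (fst T + t *\<^sub>R snd T) < 1}"

definition tube_dir :: "('n::finite) tube \<Rightarrow> real^'n" where
  "tube_dir T = snd T"

definition cube :: "int^('n::finite) \<Rightarrow> (real^'n) set" where
  "cube m = {x. \<forall>i. of_int (m $ i) \<le> x $ i \<and> x $ i < of_int (m $ i) + 1}"

text \<open>Unsigned d-dimensional volume of the parallelepiped spanned by v 0, ..., v (d-1):
  square root of the Gram determinant (determinant written out via Leibniz).\<close>
definition gram_det :: "(nat \<Rightarrow> 'a::real_inner) \<Rightarrow> nat \<Rightarrow> real" where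
  "gram_det v d = (\<Sum>p | p permutes {..<d}. of_int (sign p) * (\<Prod>i<d. v i \<bullet> v (p i)))"

definition wedge :: "(nat \<Rightarrow> 'a::real_inner) \<Rightarrow> nat \<Rightarrow> real" where
  "wedge v d = sqrt (gram_det v d)"

end

theory Submission imports Defs "Jordan_Normal_Form.Determinant" begin
lemma gs_exists:
  fixes v :: "nat \<Rightarrow> 'a::real_inner"
  shows "\<exists>w U. (\<forall>i<m. \<forall>j<m. i \<noteq> j \<longrightarrow> inner (w i) (w j) = 0) \<and>
     (\<forall>i<m. v i = (\<Sum>k<m. U k i *\<^sub>R w k))"
proof (induction m)
  case 0
  then show ?case by simp
next
  case (Suc m)
  then obtain w U where orth: "\<forall>i<m. \<forall>j<m. i \<noteq> j \<longrightarrow> inner (w i) (w j) = 0"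
    and rep: "\<forall>i<m. v i = (\<Sum>k<m. U k i *\<^sub>R w k)" by blast
  define c where "c k = inner (v m) (w k) / inner (w k) (w k)" for k
  define w' where "w' = w(m := v m - (\<Sum>k<m. c k *\<^sub>R w k))"
  define U' where "U' k i = (if i < m then (if k < m then U k i else 0)
      else (if k = m then 1 else c k))" for k i
  have ortm: "inner (w' m) (w' j) = 0" if "j < m" for j
  proof -
    have "inner (w' m) (w' j) = inner (v m) (w j) - (\<Sum>k<m. c k * inner (w k) (w j))"
      using that by (simp add: w'_def inner_diff_left inner_sum_left)
    also have "(\<Sum>k<m. c k * inner (w k) (w j)) = c j * inner (w j) (w j)"
    proof -
      have "(\<Sum>k<m. c k * inner (w k) (w j)) = (\<Sum>k<m. if k = j then c j * inner (w j) (w j) else 0)"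
        using that orth by (intro sum.cong) auto
      thus ?thesis using that by simp
    qed
    also have "inner (v m) (w j) - c j * inner (w j) (w j) = 0"
      by (cases "inner (w j) (w j) = 0") (auto simp: c_def)
    finally show ?thesis .
  qed
  have "\<forall>i<Suc m. \<forall>j<Suc m. i \<noteq> j \<longrightarrow> inner (w' i) (w' j) = 0"
  proof (intro allI impI)
    fix i j assume ij: "i < Suc m" "j < Suc m" "i \<noteq> j"
    show "inner (w' i) (w' j) = 0"
    proof (cases "i = m")
      case True thus ?thesis using ij ortm by simp
    next
      case False
      show ?thesis
      proof (cases "j = m")
        case True thus ?thesis using ij ortm False by (simp add: inner_commute)
      next
        case False2: False
        thus ?thesis using ij orth False by (simp add: w'_def)
      qed
    qed
  qed
  moreover have "\<forall>i<Suc m. v i = (\<Sum>k<Suc m. U' k i *\<^sub>R w' k)"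
  proof (intro allI impI)
    fix i assume i: "i < Suc m"
    show "v i = (\<Sum>k<Suc m. U' k i *\<^sub>R w' k)"
    proof (cases "i = m")
      case True
      have "(\<Sum>k<Suc m. U' k i *\<^sub>R w' k) = (\<Sum>k<m. c k *\<^sub>R w k) + w' m"
        using True by (simp add: U'_def w'_def)
      also have "\<dots> = v m" by (simp add: w'_def)
      finally show ?thesis using True by simp
    next
      case False
      hence im: "i < m" using i by simp
      have "(\<Sum>k<Suc m. U' k i *\<^sub>R w' k) = (\<Sum>k<m. U k i *\<^sub>R w k)"
        using im by (simp add: U'_def w'_def)
      thus ?thesis using rep im by simp
    qed
  qed
  ultimately show ?case by blast
qed

lemma gram_entry:
  fixes v :: "nat \<Rightarrow> 'a::real_inner"
  assumes orth: "\<forall>i<m. \<forall>j<m. i \<noteq> j \<longrightarrow> inner (w i) (w j) = 0"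
    and rep: "\<forall>i<m. v i = (\<Sum>k<m. U k i *\<^sub>R w k)"
    and i: "i < m" and j: "j < m"
  shows "inner (v i) (v j) = (\<Sum>k<m. (U k i * norm (w k)) * (U k j * norm (w k)))"
proof -
  have "inner (v i) (v j) = (\<Sum>k<m. \<Sum>l<m. U k i * U l j * inner (w k) (w l))"
    using rep i j by (simp add: inner_sum_left inner_sum_right sum_distrib_left mult.assoc)
      (subst sum.swap, simp add: inner_commute mult_ac)
  also have "\<dots> = (\<Sum>k<m. U k i * U k j * inner (w k) (w k))"
  proof (rule sum.cong[OF refl])
    fix k assume k: "k \<in> {..<m}"
    have "(\<Sum>l<m. U k i * U l j * inner (w k) (w l)) = (\<Sum>l<m. if l = k then U k i * U k j * inner (w k) (w k) else 0)"
      using k orth by (intro sum.cong) auto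
    thus "(\<Sum>l<m. U k i * U l j * inner (w k) (w l)) = U k i * U k j * inner (w k) (w k)"
      using k by simp
  qed
  also have "\<dots> = (\<Sum>k<m. (U k i * norm (w k)) * (U k j * norm (w k)))"
    by (simp add: power2_norm_eq_inner[symmetric] power2_eq_square mult_ac)
  finally show ?thesis .
qed

lemma gram_det_nonneg:
  fixes v :: "nat \<Rightarrow> 'a::real_inner"
  shows "gram_det v d \<ge> 0"
proof -
  obtain w U where orth: "\<forall>i<d. \<forall>j<d. i \<noteq> j \<longrightarrow> inner (w i) (w j) = 0"
    and rep: "\<forall>i<d. v i = (\<Sum>k<d. U k i *\<^sub>R w k)" using gs_exists by blast
  define B :: "real mat" where "B = mat d d (\<lambda>(k,i). U k i * norm (w k))"
  define G :: "real mat" where "G = mat d d (\<lambda>(i,j). inner (v i) (v j))"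
  have B: "B \<in> carrier_mat d d" by (simp add: B_def)
  have "gram_det v d = Determinant.det G"
    unfolding gram_det_def Determinant.det_def' [OF _] 
    by (subst det_def'[of _ d]) (auto simp: G_def lessThan_atLeast0 intro!: sum.cong prod.cong
        dest: permutes_in_image)
  also have "G = transpose_mat B * B"
  proof (rule eq_matI)
    fix i j assume "i < dim_row (transpose_mat B * B)" "j < dim_col (transpose_mat B * B)"
    hence ij: "i < d" "j < d" by (auto simp: B_def)
    have "(transpose_mat B * B) $$ (i, j) = (\<Sum>k<d. (U k i * norm (w k)) * (U k j * norm (w k)))"
      using ij by (simp add: B_def scalar_prod_def lessThan_atLeast0)
    also have "\<dots> = inner (v i) (v j)" using gram_entry[OF orth rep ij] by simp
    finally show "G $$ (i, j) = (transpose_mat B * B) $$ (i, j)" using ij by (simp add: G_def)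
  qed (auto simp: G_def B_def)
  also have "Determinant.det (transpose_mat B * B) = Determinant.det B * Determinant.det B"
    using B by (simp add: det_mult[of _ d] det_transpose)
  finally show ?thesis by simp
qed

lemma root_pow: "0 \<le> (x::real) \<Longrightarrow> 0 < n \<Longrightarrow> (x powr (1/real n))^n = x"
  by (cases "x = 0") (simp_all add: powr_realpow[symmetric] powr_powr)

lemma cube_idx: "x \<in> cube Q \<longleftrightarrow> Q = (\<chi> i. \<lfloor>x $ i\<rfloor>)"
  unfolding cube_def Finite_Cartesian_Product.vec_eq_iff by (auto simp: floor_eq_iff) (metis floor_eq_iff)

lemma cube_sets: "cube Q \<in> sets lborel"
  unfolding cube_def by measurable

lemma cube_measure: "emeasure lborel (cube (Q::int^'n::finite)) \<le> 1"
proof -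
  have "cube Q \<subseteq> cbox (\<chi> i. of_int (Q $ i)) (\<chi> i. of_int (Q $ i) + 1)"
    by (auto simp: cube_def mem_box_cart less_imp_le)
  hence "emeasure lborel (cube Q) \<le> emeasure lborel (cbox (\<chi> i. real_of_int (Q $ i)) (\<chi> i. real_of_int (Q $ i) + 1))"
    by (intro emeasure_mono) auto
  also have "\<dots> = 1"
    by (subst emeasure_lborel_cbox_eq) (auto simp: Basis_vec_def inner_axis intro!: prod.neutral)
  finally show ?thesis .
qed

lemma holder_amgm:
  fixes g :: "nat \<Rightarrow> 'q \<Rightarrow> real" and B :: "nat \<Rightarrow> real"
  assumes fin: "finite Fs" and d: "0 < d" and g0: "\<forall>j<d. \<forall>Q\<in>Fs. g j Q \<ge> 0"
    and gB: "\<forall>j<d. (\<Sum>Q\<in>Fs. g j Q) \<le> B j"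
  shows "(\<Sum>Q\<in>Fs. \<Prod>j<d. g j Q powr (1/d)) \<le> (\<Prod>j<d. B j powr (1/d))"
proof (cases "\<exists>j<d. B j = 0")
  case True
  then obtain j0 where j0: "j0 < d" "B j0 = 0" by blast
  have "\<forall>Q\<in>Fs. g j0 Q = 0"
  proof -
    have "(\<Sum>Q\<in>Fs. g j0 Q) \<le> 0" using gB j0 by auto
    moreover have "\<forall>Q\<in>Fs. g j0 Q \<ge> 0" using g0 j0 by auto
    ultimately show ?thesis using fin by (meson sum_nonneg_eq_0_iff order_antisym sum_nonneg)
  qed
  hence "(\<Sum>Q\<in>Fs. \<Prod>j<d. g j Q powr (1/d)) = 0"
    using j0 by (intro sum.neutral ballI) (auto intro!: prod_zero bexI[of _ j0])
  thus ?thesis by (simp add: prod_nonneg)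
next
  case False
  have Bpos: "\<forall>j<d. B j > 0"
  proof (intro allI impI)
    fix j assume j: "j < d"
    have "0 \<le> (\<Sum>Q\<in>Fs. g j Q)" using g0 j by (intro sum_nonneg) auto
    thus "B j > 0" using gB j False by force
  qed
  have card: "card {..<d} = d" by simp
  have key: "(\<Prod>j<d. g j Q powr (1/d)) \<le> (\<Prod>j<d. B j powr (1/d)) * (\<Sum>j<d. (g j Q / B j) / d)"
    if Q: "Q \<in> Fs" for Q
  proof -
    have "(\<Prod>j<d. g j Q powr (1/d)) = (\<Prod>j<d. B j powr (1/d) * (g j Q / B j) powr (1/d))"
      using Bpos g0 Q by (intro prod.cong refl) (auto simp: powr_divide powr_ge_zero)
    also have "\<dots> = (\<Prod>j<d. B j powr (1/d)) * (\<Prod>j<d. g j Q / B j) powr (1/d)"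
      by (simp add: prod.distrib prod_powr_distrib)
    also have "(\<Prod>j<d. g j Q / B j) powr (1/d) \<le> (\<Sum>j<d. (g j Q / B j) / d)"
      using arith_geom_mean[of "{..<d}" "\<lambda>j. g j Q / B j"] d g0 Bpos Q
      by (metis card divide_nonneg_pos finite_lessThan lessThan_empty_iff lessThan_iff not_less0)
    finally show ?thesis by (simp add: mult_left_mono prod_nonneg)
  qed
  have "(\<Sum>Q\<in>Fs. \<Prod>j<d. g j Q powr (1/d)) \<le> (\<Sum>Q\<in>Fs. (\<Prod>j<d. B j powr (1/d)) * (\<Sum>j<d. (g j Q / B j) / d))"
    using key by (rule sum_mono)
  also have "\<dots> = (\<Prod>j<d. B j powr (1/d)) * (\<Sum>j<d. (\<Sum>Q\<in>Fs. g j Q) / B j / d)"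
    by (simp add: sum_distrib_left[symmetric] sum_divide_distrib sum.swap[of _ _ Fs])
  also have "\<dots> \<le> (\<Prod>j<d. B j powr (1/d)) * (\<Sum>j<d. 1 / d)"
    using gB Bpos by (intro mult_left_mono sum_mono divide_right_mono) (auto simp: prod_nonneg)
  also have "\<dots> = (\<Prod>j<d. B j powr (1/d))" using d by simp
  finally show ?thesis .
qed

theorem proposition2p1:
  fixes d :: nat and C :: real
    and n_type :: "('n::finite) itself"
  assumes "2 \<le> d" and "d \<le> CARD('n)" and "C > 0"
    and hyp: "\<forall>(\<T> :: nat \<Rightarrow> 'n tube set) (M :: int^'n \<Rightarrow> real).
       (\<forall>j<d. finite (\<T> j) \<and> (\<forall>T\<in>\<T> j. is_tube T)) \<and>
       finite {Q. M Q \<noteq> 0} \<and> (\<forall>Q. M Q \<ge> 0) \<and>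
       (\<Sum>Q\<in>{Q. M Q \<noteq> 0}. M Q ^ CARD('n)) = 1
       \<longrightarrow> (\<exists>S :: nat \<Rightarrow> int^'n \<Rightarrow> 'n tube \<Rightarrow> real.
              (\<forall>j<d. \<forall>Q. \<forall>T\<in>\<T> j. S j Q T \<ge> 0) \<and>
              (\<forall>Q. \<forall>T\<in>Pi\<^sub>E {..<d} \<T>.
                  (\<forall>j<d. tube_set (T j) \<inter> cube Q \<noteq> {}) \<longrightarrow>
                  wedge (\<lambda>j. tube_dir (T j)) d * M Q ^ CARD('n)
                    \<le> C * (\<Prod>j<d. S j Q (T j))) \<and>
              (\<forall>j<d. \<forall>T\<in>\<T> j. \<forall>F. finite F \<and> F \<subseteq> {Q. tube_set T \<inter> cube Q \<noteq> {}}
                  \<longrightarrow> (\<Sum>Q\<in>F. S j Q T) \<le> C))"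
  shows "\<exists>Cdn :: real. \<forall>(\<T> :: nat \<Rightarrow> 'n tube set) (a :: nat \<Rightarrow> 'n tube \<Rightarrow> real).
       (\<forall>j<d. finite (\<T> j) \<and> (\<forall>T\<in>\<T> j. is_tube T \<and> a j T \<ge> 0))
       \<longrightarrow> (\<integral>\<^sup>+ x. ennreal ((\<Sum>T\<in>Pi\<^sub>E {..<d} \<T>.
                 (\<Prod>j<d. a j (T j) * indicator (tube_set (T j)) x)
                 * wedge (\<lambda>j. tube_dir (T j)) d) powr (1 / (real d - 1))) \<partial>lborel)
           \<le> ennreal (Cdn * (\<Prod>j<d. \<Sum>T\<in>\<T> j. a j T) powr (1 / (real d - 1)))"
proof -
  define N where "N = CARD('n)"
  have N0: "0 < N" by (simp add: N_def)
  define p where "p = 1 / (real d - 1)"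
  have d1: "real d - 1 > 0" using assms(1) by simp
  have p0: "p > 0" using d1 by (simp add: p_def)
  have pd: "p + 1 = real d * p" using d1 by (simp add: p_def field_simps)
  define K where "K = C powr ((real d + 1) * p)"
  show ?thesis
  proof (rule exI[of _ K], intro allI impI)
    fix \<T> :: "nat \<Rightarrow> 'n tube set" and a :: "nat \<Rightarrow> 'n tube \<Rightarrow> real"
    assume H: "\<forall>j<d. finite (\<T> j) \<and> (\<forall>T\<in>\<T> j. is_tube T \<and> a j T \<ge> 0)"
    define meets where "meets T Q \<longleftrightarrow> tube_set T \<inter> cube Q \<noteq> {}" for T :: "'n tube" and Q
    define wd where "wd T = wedge (\<lambda>j. tube_dir (T j)) d" for T :: "nat \<Rightarrow> 'n tube"
    define P where "P = (\<Prod>j<d. \<Sum>T\<in>\<T> j. a j T)"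
    define G where "G Q = (\<Sum>T\<in>{T\<in>Pi\<^sub>E {..<d} \<T>. \<forall>j<d. meets (T j) Q}. (\<Prod>j<d. a j (T j)) * wd T)" for Q
    have wd0: "wd T \<ge> 0" for T by (simp add: wd_def wedge_def gram_det_nonneg)
    have finPi: "finite (Pi\<^sub>E {..<d} \<T>)" using H by (intro finite_PiE) auto
    have aPi: "(\<Prod>j<d. a j (T j)) \<ge> 0" if "T \<in> Pi\<^sub>E {..<d} \<T>" for T
      using that H by (intro prod_nonneg) (auto simp: PiE_iff)
    have G0: "G Q \<ge> 0" for Q
      unfolding G_def using aPi wd0 by (intro sum_nonneg) auto
    have P0: "P \<ge> 0" unfolding P_def using H by (intro prod_nonneg sum_nonneg) auto
    have K0: "K \<ge> 0" by (simp add: K_def)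
    have stepC: "(\<Sum>Q\<in>Fs. G Q powr p) \<le> K * P powr p" if Fs: "finite Fs" for Fs
    proof -
      define s where "s = (\<Sum>Q\<in>Fs. G Q powr p)"
      have s0: "s \<ge> 0" unfolding s_def by (simp add: sum_nonneg)
      show ?thesis
      proof (cases "s = 0")
        case True thus ?thesis using K0 P0 by (simp add: s_def)
      next
        case False
        hence spos: "s > 0" using s0 by simp
        define M where "M Q = (if Q \<in> Fs then (G Q powr p / s) powr (1 / real N) else 0)" for Q
        have MN: "M Q ^ N = G Q powr p / s" if "Q \<in> Fs" for Q
          using that N0 s0 by (simp add: M_def root_pow N_def)
        have M0: "\<forall>Q. M Q \<ge> 0" by (simp add: M_def)
        have Msupp: "{Q. M Q \<noteq> 0} \<subseteq> Fs" by (auto simp: M_def split: if_splits)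
        have Mfin: "finite {Q. M Q \<noteq> 0}" using Msupp Fs finite_subset by blast
        have Msum: "(\<Sum>Q\<in>{Q. M Q \<noteq> 0}. M Q ^ CARD('n)) = 1"
        proof -
          have "(\<Sum>Q\<in>{Q. M Q \<noteq> 0}. M Q ^ CARD('n)) = (\<Sum>Q\<in>Fs. M Q ^ N)"
            unfolding N_def using Msupp Fs by (intro sum.mono_neutral_left) auto
          also have "\<dots> = (\<Sum>Q\<in>Fs. G Q powr p / s)" using MN by simp
          also have "\<dots> = 1" using spos by (simp add: s_def sum_divide_distrib[symmetric])
          finally show ?thesis .
        qed
        have prem: "(\<forall>j<d. finite (\<T> j) \<and> (\<forall>T\<in>\<T> j. is_tube T)) \<and>
          finite {Q. M Q \<noteq> 0} \<and> (\<forall>Q. M Q \<ge> 0) \<and> (\<Sum>Q\<in>{Q. M Q \<noteq> 0}. M Q ^ CARD('n)) = 1"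
          using H Mfin M0 Msum by blast
        obtain S :: "nat \<Rightarrow> int^'n \<Rightarrow> 'n tube \<Rightarrow> real" where
          S0: "\<forall>j<d. \<forall>Q. \<forall>T\<in>\<T> j. S j Q T \<ge> 0" and
          Si: "\<forall>Q. \<forall>T\<in>Pi\<^sub>E {..<d} \<T>. (\<forall>j<d. tube_set (T j) \<inter> cube Q \<noteq> {}) \<longrightarrow>
                  wedge (\<lambda>j. tube_dir (T j)) d * M Q ^ CARD('n) \<le> C * (\<Prod>j<d. S j Q (T j))" and
          Sii: "\<forall>j<d. \<forall>T\<in>\<T> j. \<forall>F. finite F \<and> F \<subseteq> {Q. tube_set T \<inter> cube Q \<noteq> {}}
                  \<longrightarrow> (\<Sum>Q\<in>F. S j Q T) \<le> C"
          using hyp[rule_format, OF prem] by (elim exE conjE) (rule that; assumption)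
        define g where "g j Q = (\<Sum>T\<in>{T\<in>\<T> j. meets T Q}. a j T * S j Q T)" for j Q
        have g0: "\<forall>j<d. \<forall>Q\<in>Fs. g j Q \<ge> 0"
          unfolding g_def using H S0 by (auto intro!: sum_nonneg)
        have gsum: "\<forall>j<d. (\<Sum>Q\<in>Fs. g j Q) \<le> C * (\<Sum>T\<in>\<T> j. a j T)"
        proof (intro allI impI)
          fix j assume j: "j < d"
          have fj: "finite (\<T> j)" using H j by blast
          have "(\<Sum>Q\<in>Fs. g j Q) = (\<Sum>Q\<in>Fs. \<Sum>T\<in>\<T> j. if meets T Q then a j T * S j Q T else 0)"
            unfolding g_def using fj by (simp add: sum.inter_filter)
          also have "\<dots> = (\<Sum>T\<in>\<T> j. a j T * (\<Sum>Q\<in>{Q\<in>Fs. meets T Q}. S j Q T))"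
            using Fs by (subst sum.swap) (simp add: sum.inter_filter sum_distrib_left if_distrib cong: if_cong)
          also have "\<dots> \<le> (\<Sum>T\<in>\<T> j. a j T * C)"
          proof (rule sum_mono)
            fix T assume T: "T \<in> \<T> j"
            have "(\<Sum>Q\<in>{Q\<in>Fs. meets T Q}. S j Q T) \<le> C"
              by (rule Sii[rule_format, OF j T]) (use Fs in \<open>auto simp: meets_def\<close>)
            thus "a j T * (\<Sum>Q\<in>{Q\<in>Fs. meets T Q}. S j Q T) \<le> a j T * C"
              using H j T by (intro mult_left_mono) auto
          qed
          also have "\<dots> = C * (\<Sum>T\<in>\<T> j. a j T)" by (simp add: sum_distrib_left mult_ac)
          finally show "(\<Sum>Q\<in>Fs. g j Q) \<le> C * (\<Sum>T\<in>\<T> j. a j T)" .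
        qed
        have pointC: "G Q powr p \<le> (C * s) powr (1 / real d) * (\<Prod>j<d. g j Q powr (1 / real d))"
          if Q: "Q \<in> Fs" for Q
        proof -
          have setEq: "{T\<in>Pi\<^sub>E {..<d} \<T>. \<forall>j<d. meets (T j) Q} = Pi\<^sub>E {..<d} (\<lambda>j. {T\<in>\<T> j. meets T Q})"
            unfolding set_eq_iff PiE_iff mem_Collect_eq lessThan_iff by blast
          have "M Q ^ N * G Q = (\<Sum>T\<in>{T\<in>Pi\<^sub>E {..<d} \<T>. \<forall>j<d. meets (T j) Q}. (\<Prod>j<d. a j (T j)) * (wd T * M Q ^ N))"
            unfolding G_def by (simp add: sum_distrib_left mult_ac)
          also have "\<dots> \<le> (\<Sum>T\<in>{T\<in>Pi\<^sub>E {..<d} \<T>. \<forall>j<d. meets (T j) Q}. (\<Prod>j<d. a j (T j)) * (C * (\<Prod>j<d. S j Q (T j))))"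
          proof (rule sum_mono)
            fix T assume T: "T \<in> {T\<in>Pi\<^sub>E {..<d} \<T>. \<forall>j<d. meets (T j) Q}"
            have "wd T * M Q ^ N \<le> C * (\<Prod>j<d. S j Q (T j))"
              using Si T by (auto simp: wd_def N_def meets_def)
            thus "(\<Prod>j<d. a j (T j)) * (wd T * M Q ^ N) \<le> (\<Prod>j<d. a j (T j)) * (C * (\<Prod>j<d. S j Q (T j)))"
              using aPi T by (intro mult_left_mono) auto
          qed
          also have "\<dots> = C * (\<Sum>T\<in>Pi\<^sub>E {..<d} (\<lambda>j. {T\<in>\<T> j. meets T Q}). \<Prod>j<d. a j (T j) * S j Q (T j))"
            unfolding setEq by (simp add: sum_distrib_left prod.distrib mult_ac)
          also have "\<dots> = C * (\<Prod>j<d. g j Q)"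
            unfolding g_def using H by (subst prod_sum_PiE) auto
          finally have A: "M Q ^ N * G Q \<le> C * (\<Prod>j<d. g j Q)" .
          have "G Q powr (real d * p) = G Q powr p * G Q"
            using pd[symmetric] G0[of Q] by (cases "G Q = 0") (simp_all add: powr_add)
          also have "\<dots> = s * (M Q ^ N * G Q)" using MN[OF Q] spos by simp
          also have "\<dots> \<le> s * (C * (\<Prod>j<d. g j Q))" using A spos by simp
          finally have B: "G Q powr (real d * p) \<le> (C * s) * (\<Prod>j<d. g j Q)" by (simp add: mult_ac)
          have "G Q powr p = (G Q powr (real d * p)) powr (1 / real d)"
            using assms(1) by (simp add: powr_powr)
          also have "\<dots> \<le> ((C * s) * (\<Prod>j<d. g j Q)) powr (1 / real d)"
            using B by (intro powr_mono2) auto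
          also have "\<dots> = (C * s) powr (1 / real d) * (\<Prod>j<d. g j Q powr (1 / real d))"
            using \<open>C > 0\<close> spos g0 Q by (simp add: powr_mult prod_nonneg prod_powr_distrib)
          finally show ?thesis .
        qed
        have "s \<le> (\<Sum>Q\<in>Fs. (C * s) powr (1 / real d) * (\<Prod>j<d. g j Q powr (1 / real d)))"
          using sum_mono[of Fs "\<lambda>Q. G Q powr p", OF pointC] by (simp only: s_def[symmetric])
        also have "\<dots> = (C * s) powr (1 / real d) * (\<Sum>Q\<in>Fs. \<Prod>j<d. g j Q powr (1 / real d))"
          by (simp add: sum_distrib_left)
        also have "\<dots> \<le> (C * s) powr (1 / real d) * (\<Prod>j<d. (C * (\<Sum>T\<in>\<T> j. a j T)) powr (1 / real d))"
          using holder_amgm[OF Fs _ g0 gsum] assms(1) by (intro mult_left_mono) auto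
        also have "\<dots> = (C ^ (d + 1) * P * s) powr (1 / real d)"
        proof -
          have "(\<Prod>j<d. (C * (\<Sum>T\<in>\<T> j. a j T)) powr (1 / real d)) = (\<Prod>j<d. C * (\<Sum>T\<in>\<T> j. a j T)) powr (1 / real d)"
            by (simp add: prod_powr_distrib)
          also have "(\<Prod>j<d. C * (\<Sum>T\<in>\<T> j. a j T)) = C ^ d * P"
            by (simp add: P_def prod.distrib)
          finally show ?thesis using \<open>C > 0\<close> spos P0
            by (simp add: powr_mult[symmetric] mult_ac)
        qed
        finally have s1: "s \<le> (C ^ (d + 1) * P * s) powr (1 / real d)" .
        have "s ^ d \<le> ((C ^ (d + 1) * P * s) powr (1 / real d)) ^ d"
          using s1 s0 by (intro power_mono) auto
        also have "\<dots> = C ^ (d + 1) * P * s"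
          using assms(1) \<open>C > 0\<close> P0 s0 by (intro root_pow) auto
        finally have "s ^ (d - 1) * s \<le> C ^ (d + 1) * P * s"
          using assms(1) by (metis Suc_diff_1 less_le_trans pos2 power_Suc2)
        hence s2: "s ^ (d - 1) \<le> C ^ (d + 1) * P" using spos by simp
        have "s = (s ^ (d - 1)) powr p"
          using spos assms(1) d1 by (simp add: powr_realpow[symmetric] powr_powr p_def of_nat_diff)
        also have "\<dots> \<le> (C ^ (d + 1) * P) powr p"
          using s2 spos p0 by (intro powr_mono2) auto
        also have "\<dots> = K * P powr p"
          using \<open>C > 0\<close> P0 by (simp add: K_def powr_mult powr_realpow[symmetric] powr_powr)
            (simp add: powr_add[symmetric] distrib_right add.commute)
        finally show ?thesis by (simp add: s_def)
      qed
    qed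
    define Fx where "Fx x = (\<Sum>T\<in>Pi\<^sub>E {..<d} \<T>.
                 (\<Prod>j<d. a j (T j) * indicator (tube_set (T j)) x)
                 * wedge (\<lambda>j. tube_dir (T j)) d)" for x
    define idx :: "real^'n \<Rightarrow> int^'n" where "idx x = (\<chi> i. \<lfloor>x $ i\<rfloor>)" for x
    have xin: "x \<in> cube (idx x)" for x by (simp add: cube_idx idx_def)
    have pw: "Fx x powr p \<le> G (idx x) powr p" for x
    proof -
      have tm: "(\<Prod>j<d. a j (T j) * indicator (tube_set (T j)) x) * wedge (\<lambda>j. tube_dir (T j)) d
               \<le> (if \<forall>j<d. meets (T j) (idx x) then (\<Prod>j<d. a j (T j)) * wd T else 0)
             \<and> 0 \<le> (\<Prod>j<d. a j (T j) * indicator (tube_set (T j)) x) * wedge (\<lambda>j. tube_dir (T j)) d"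
        if T: "T \<in> Pi\<^sub>E {..<d} \<T>" for T
      proof (cases "\<forall>j<d. x \<in> tube_set (T j)")
        case True
        hence "\<forall>j<d. meets (T j) (idx x)" using xin by (auto simp: meets_def)
        moreover have "(\<Prod>j<d. a j (T j) * indicator (tube_set (T j)) x) = (\<Prod>j<d. a j (T j))"
          using True by (intro prod.cong) auto
        ultimately show ?thesis using aPi[OF T] wd0[of T] by (simp add: wd_def)
      next
        case False
        then obtain j where j: "j < d" "x \<notin> tube_set (T j)" by blast
        hence hz: "(\<Prod>j<d. a j (T j) * indicator (tube_set (T j)) x) = 0"
          by (intro prod_zero) (auto intro!: bexI[of _ j])
        show ?thesis unfolding hz using aPi[OF T] wd0[of T] by (simp add: wd_def)
      qed
      have F0: "0 \<le> Fx x" unfolding Fx_def using tm by (intro sum_nonneg) auto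
      have "Fx x \<le> (\<Sum>T\<in>Pi\<^sub>E {..<d} \<T>. if \<forall>j<d. meets (T j) (idx x) then (\<Prod>j<d. a j (T j)) * wd T else 0)"
        unfolding Fx_def using tm by (intro sum_mono) auto
      also have "\<dots> = G (idx x)" unfolding G_def using finPi by (simp add: sum.inter_filter)
      finally show ?thesis using F0 p0 by (intro powr_mono2) auto
    qed
    have cUNIV: "countable (UNIV :: (int^'n) set)" by simp
    have "inj (\<lambda>k::int. (\<chi> i::'n. k))" by (auto simp: inj_def Finite_Cartesian_Product.vec_eq_iff)
    hence iUNIV: "infinite (UNIV :: (int^'n) set)"
      by (metis finite_imageD finite_subset infinite_UNIV_int subset_UNIV)
    obtain e :: "int^'n \<Rightarrow> nat" where e: "bij_betw e UNIV UNIV"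
      using countableE_infinite[OF cUNIV iUNIV] by blast
    define q where "q = inv_into UNIV e"
    have qe: "q (e Q) = Q" for Q using e by (simp add: q_def bij_betw_def)
    have eq: "e (q k) = k" for k using e by (simp add: q_def bij_betw_def surj_f_inv_f)
    have injq: "inj q" by (metis eq injI)
    have D: "(\<integral>\<^sup>+ x. ennreal (Fx x powr p) \<partial>lborel) \<le> ennreal (K * P powr p)"
    proof -
      have "(\<integral>\<^sup>+ x. ennreal (Fx x powr p) \<partial>lborel) \<le> (\<integral>\<^sup>+ x. ennreal (G (idx x) powr p) \<partial>lborel)"
        by (intro nn_integral_mono ennreal_leI pw)
      also have "\<dots> = (\<integral>\<^sup>+ x. (\<Sum>k. ennreal (G (q k) powr p) * indicator (cube (q k)) x) \<partial>lborel)"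
      proof (rule nn_integral_cong)
        fix x
        have "(\<Sum>k. ennreal (G (q k) powr p) * indicator (cube (q k)) x)
            = (\<Sum>k\<in>{e (idx x)}. ennreal (G (q k) powr p) * indicator (cube (q k)) x)"
        proof (rule suminf_finite)
          fix k assume "k \<notin> {e (idx x)}"
          hence "q k \<noteq> idx x" using eq by (metis singletonI)
          hence "x \<notin> cube (q k)" by (simp add: cube_idx idx_def)
          thus "ennreal (G (q k) powr p) * indicator (cube (q k)) x = 0" by simp
        qed simp
        also have "\<dots> = ennreal (G (idx x) powr p)" using xin by (simp add: qe)
        finally show "ennreal (G (idx x) powr p) = (\<Sum>k. ennreal (G (q k) powr p) * indicator (cube (q k)) x)" ..
      qed
      also have "\<dots> = (\<Sum>k. \<integral>\<^sup>+ x. ennreal (G (q k) powr p) * indicator (cube (q k)) x \<partial>lborel)"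
        by (rule nn_integral_suminf, rule borel_measurable_times_ennreal, simp,
            rule borel_measurable_indicator[OF cube_sets])
      also have "\<dots> = (\<Sum>k. ennreal (G (q k) powr p) * emeasure lborel (cube (q k)))"
        by (simp only: nn_integral_cmult_indicator[OF cube_sets])
      also have "\<dots> \<le> (\<Sum>k. ennreal (G (q k) powr p))"
      proof (rule suminf_le)
        fix k
        have "ennreal (G (q k) powr p) * emeasure lborel (cube (q k)) \<le> ennreal (G (q k) powr p) * 1"
          by (rule mult_left_mono[OF cube_measure]) simp
        thus "ennreal (G (q k) powr p) * emeasure lborel (cube (q k)) \<le> ennreal (G (q k) powr p)" by simp
      qed (rule summableI)+
      also have "\<dots> \<le> ennreal (K * P powr p)"
        unfolding suminf_eq_SUP
      proof (rule SUP_least)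
        fix m
        have "(\<Sum>k<m. ennreal (G (q k) powr p)) = ennreal (\<Sum>k<m. G (q k) powr p)"
          by (simp add: sum_ennreal)
        also have "(\<Sum>k<m. G (q k) powr p) = (\<Sum>Q\<in>q ` {..<m}. G Q powr p)"
          using injq by (simp add: sum.reindex inj_on_subset)
        also have "\<dots> \<le> K * P powr p" by (intro stepC) simp
        finally show "(\<Sum>k<m. ennreal (G (q k) powr p)) \<le> ennreal (K * P powr p)"
          by (simp add: ennreal_leI)
      qed
      finally show ?thesis .
    qed
    show "(\<integral>\<^sup>+ x. ennreal ((\<Sum>T\<in>Pi\<^sub>E {..<d} \<T>.
                 (\<Prod>j<d. a j (T j) * indicator (tube_set (T j)) x)
                 * wedge (\<lambda>j. tube_dir (T j)) d) powr (1 / (real d - 1))) \<partial>lborel)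
           \<le> ennreal (K * (\<Prod>j<d. \<Sum>T\<in>\<T> j. a j T) powr (1 / (real d - 1)))"
      using D by (simp only: Fx_def p_def P_def)
  qed
qed

end
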